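(* Let $U\in\mathcal{U}_N$ and $S\subseteq[n]$. Prepare the Choi–Jamiołkowski state $|v(U)\rangle$ (using one query to $U$), measure the $2|S|$ qubits in the registers $S\cup\{\tilde\ell:\ell\in S\}$ in the Bell basis $\{|v(\sigma_y)\rangle\}_{y\in\mathbb{Z}_4^{S}}$, and let $X=0$ if the outcome is $|v(I^{\otimes|S|})\rangle=|\mathrm{EPR}\rangle^{\otimes|S|}$ and $X=1$ otherwise. Then $\mathbb{E}[X]=\mathrm{Inf}_S[U]$.
   Context: $N=2^n$, $\mathcal{U}_N$ is the set of $N\times N$ unitaries. Pauli matrices: $\sigma_0=I$, $\sigma_1=X$, $\sigma_2=Y$, $\sigma_3=Z$; for $x\in\mathbb{Z}_4^n$, $\sigma_x=\sigma_{x_1}\otimes\cdots\otimes\sigma_{x_n}$ and $\mathrm{supp}(x)=\{i:x_i\ne0\}$. Every $U\in\mathbb{C}^{N\times N}$ can be uniquely written $U=\sum_{x\in\mathbb{Z}_4^n}\widehat{U}(x)\sigma_x$ (Pauli coefficients). The influence of $S\subseteq[n]$ on $U$ is $\mathrm{Inf}_S[U]=\sum_{x:\,\mathrm{supp}(x)\cap S\ne\emptyset}|\widehat{U}(x)|^2$. The Choi–Jamiołkowski state of an $N\times N$ matrix $A$ is $|v(A)\rangle=(A\otimes I)\frac{1}{\sqrt N}\sum_{i}|i\rangle|i\rangle$ on $2n$ qubits; qubit $\ell\in[n]$ (acted on by $A$) is paired with qubit $\tilde\ell\in\{n+1,\dots,2n\}$ with which it formed an EPR pair $|\mathrm{EPR}\rangle=(|00\rangle+|11\rangle)/\sqrt2$.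 For $y\in\mathbb{Z}_4^S$, $|v(\sigma_y)\rangle$ is the corresponding state on the $2|S|$ qubits $S\cup\{\tilde\ell:\ell\in S\}$. *)

theory Defs
  imports Complex_Main
begin

text \<open>Qubits are indexed 0,...,n-1 (the paper's qubit l corresponds to index l-1). An N x N matrix (N = 2^n) is a function taking a row basis string and
  a column basis string (both in bits_on {..<n}) to a complex number.\<close>

type_synonym bstr = "nat \<Rightarrow> bool"
type_synonym qmat = "bstr \<Rightarrow> bstr \<Rightarrow> complex"

definition bits_on :: "nat set \<Rightarrow> bstr set" where
  "bits_on T = {f. \<forall>i. i \<notin> T \<longrightarrow> \<not> f i}"

text \<open>Pauli labels on T: elements of Z_4^T, i.e. functions with values in {0,1,2,3} on T
  and 0 outside T.\<close>
definition paulis_on :: "nat set \<Rightarrow> (nat \<Rightarrow> nat) set" where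
  "paulis_on T = {x. (\<forall>i\<in>T. x i < 4) \<and> (\<forall>i. i \<notin> T \<longrightarrow> x i = 0)}"

text \<open>Single-qubit Pauli matrices sigma_0 = I, sigma_1 = X, sigma_2 = Y, sigma_3 = Z;
  the basis state |0> is False, |1> is True; arguments are (label, row, column).\<close>
definition pauli1 :: "nat \<Rightarrow> bool \<Rightarrow> bool \<Rightarrow> complex" where
  "pauli1 k a b =
     (if k = 0 then (if a = b then 1 else 0)
      else if k = 1 then (if a \<noteq> b then 1 else 0)
      else if k = 2 then (if a = b then 0 else if a then \<i> else - \<i>)
      else (if a = b then (if a then -1 else 1) else 0))"

definition pauli_on :: "nat set \<Rightarrow> (nat \<Rightarrow> nat) \<Rightarrow> qmat" where
  "pauli_on T x a b = (\<Prod>i\<in>T. pauli1 (x i) (a i) (b i))"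

definition unitary :: "nat \<Rightarrow> qmat \<Rightarrow> bool" where
  "unitary n U \<longleftrightarrow> (\<forall>a\<in>bits_on {..<n}. \<forall>b\<in>bits_on {..<n}.
      (\<Sum>c\<in>bits_on {..<n}. U a c * cnj (U b c)) = (if a = b then 1 else 0))"

definition pauli_coeff :: "nat \<Rightarrow> qmat \<Rightarrow> (nat \<Rightarrow> nat) \<Rightarrow> complex" where
  "pauli_coeff n U = (THE c. (\<forall>x. x \<notin> paulis_on {..<n} \<longrightarrow> c x = 0) \<and>
      (\<forall>a\<in>bits_on {..<n}. \<forall>b\<in>bits_on {..<n}.
          U a b = (\<Sum>x\<in>paulis_on {..<n}. c x * pauli_on {..<n} x a b)))"

definition influence :: "nat \<Rightarrow> nat set \<Rightarrow> qmat \<Rightarrow> real" where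
  "influence n S U = (\<Sum>x\<in>{x\<in>paulis_on {..<n}. \<exists>i\<in>S. x i \<noteq> 0}.
      (cmod (pauli_coeff n U x))\<^sup>2)"

text \<open>A state on 2n qubits: amplitude psi a b, where a is the basis string of the qubits
  1..n and b that of the paired qubits ~1..~n (qubit l of b is ~l).\<close>
definition choi :: "nat \<Rightarrow> qmat \<Rightarrow> qmat" where
  "choi n A a b = A a b / complex_of_real (sqrt (2 ^ n))"

definition bell_vec :: "nat set \<Rightarrow> (nat \<Rightarrow> nat) \<Rightarrow> qmat" where
  "bell_vec S y = choi (card S) (pauli_on S y)"

definition merge :: "nat set \<Rightarrow> bstr \<Rightarrow> bstr \<Rightarrow> bstr" where
  "merge S f g = (\<lambda>i. if i \<in> S then f i else g i)"

text \<open>Born-rule probability of outcome |v(sigma_y)> when measuring the registers S and ~S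
  of the 2n-qubit state psi in the Bell basis: squared norm of (<v(sigma_y)| (x) I) psi.\<close>
definition bell_prob :: "nat \<Rightarrow> nat set \<Rightarrow> qmat \<Rightarrow> (nat \<Rightarrow> nat) \<Rightarrow> real" where
  "bell_prob n S psi y =
     (\<Sum>a'\<in>bits_on ({..<n} - S). \<Sum>b'\<in>bits_on ({..<n} - S).
        (cmod (\<Sum>aS\<in>bits_on S. \<Sum>bS\<in>bits_on S.
           cnj (bell_vec S y aS bS) * psi (merge S aS a') (merge S bS b')))\<^sup>2)"

text \<open>E[X], where X = 0 on outcome |EPR>^{(x)|S|} (label y = 0) and X = 1 otherwise.\<close>
definition expected_X :: "nat \<Rightarrow> nat set \<Rightarrow> qmat \<Rightarrow> real" where
  "expected_X n S U = (\<Sum>y\<in>paulis_on S - {(\<lambda>_. 0)}. bell_prob n S (choi n U) y)"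

end

theory Submission
  imports Defs
begin

definition fs :: "nat set \<Rightarrow> 'v set \<Rightarrow> 'v \<Rightarrow> (nat \<Rightarrow> 'v) set" where
  "fs T V d = {f. (\<forall>i\<in>T. f i \<in> V) \<and> (\<forall>i. i \<notin> T \<longrightarrow> f i = d)}"

lemma bits_on_fs: "bits_on T = fs T UNIV False"
  unfolding bits_on_def fs_def by auto

lemma paulis_on_fs: "paulis_on T = fs T {..<4} 0"
  unfolding paulis_on_def fs_def by auto

lemma fs_empty: "fs {} V d = {\<lambda>_. d}"
  unfolding fs_def by auto

lemma fs_insert:
  assumes "i \<notin> T"
  shows "fs (insert i T) V d = (\<lambda>p. (snd p)(i:=fst p)) ` (V \<times> fs T V d)"
proof (rule set_eqI, rule iffI)
  fix g assume g: "g \<in> fs (insert i T) V d"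
  have "g = (\<lambda>p. (snd p)(i:=fst p)) (g i, g(i:=d))" by simp
  moreover have "(g i, g(i:=d)) \<in> V \<times> fs T V d" using g assms unfolding fs_def by auto
  ultimately show "g \<in> (\<lambda>p. (snd p)(i:=fst p)) ` (V \<times> fs T V d)" by blast
next
  fix g assume "g \<in> (\<lambda>p. (snd p)(i:=fst p)) ` (V \<times> fs T V d)"
  then show "g \<in> fs (insert i T) V d" using assms unfolding fs_def by auto
qed

lemma fs_inj:
  assumes "i \<notin> T"
  shows "inj_on (\<lambda>p. (snd p)(i:=fst p)) (V \<times> fs T V d)"
proof (rule inj_onI, clarsimp)
  fix v f v' f'
  assume f: "f \<in> fs T V d" and f': "f' \<in> fs T V d" and e: "f(i := v) = f'(i := v')"
  have "v = v'" using fun_cong[OF e, of i] by simp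
  moreover have "f = f'"
  proof
    fix j show "f j = f' j"
      using fun_cong[OF e, of j] f f' assms unfolding fs_def by (cases "j = i") auto
  qed
  ultimately show "v = v' \<and> f = f'" by simp
qed

lemma fs_finite: "finite T \<Longrightarrow> finite V \<Longrightarrow> finite (fs T V d)"
proof (induction T rule: finite_induct)
  case empty then show ?case by (simp add: fs_empty)
next
  case (insert i T) then show ?case by (simp add: fs_insert)
qed

lemma fs_sum_prod:
  fixes g :: "nat \<Rightarrow> 'v \<Rightarrow> 'a::comm_semiring_1"
  assumes "finite T" "finite V"
  shows "(\<Sum>f\<in>fs T V d. \<Prod>i\<in>T. g i (f i)) = (\<Prod>i\<in>T. \<Sum>v\<in>V. g i v)"
  using assms(1)
proof (induction T rule: finite_induct)
  case empty then show ?case by (simp add: fs_empty)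
next
  case (insert i T)
  have "(\<Sum>f\<in>fs (insert i T) V d. \<Prod>j\<in>insert i T. g j (f j))
      = (\<Sum>p\<in>V \<times> fs T V d. \<Prod>j\<in>insert i T. g j (((snd p)(i:=fst p)) j))"
    unfolding fs_insert[OF insert(2)] by (subst sum.reindex[OF fs_inj[OF insert(2)]]) (simp add: comp_def)
  also have "\<dots> = (\<Sum>p\<in>V \<times> fs T V d. g i (fst p) * (\<Prod>j\<in>T. g j (snd p j)))"
  proof (rule sum.cong[OF refl])
    fix p :: "'v \<times> (nat \<Rightarrow> 'v)"
    obtain v f where pv: "p = (v, f)" by fastforce
    have h1: "(\<Prod>j\<in>T. g j ((f(i := v)) j)) = (\<Prod>j\<in>T. g j (f j))"
      using insert(2) by (intro prod.cong) auto
    have h2: "(\<Prod>j\<in>insert i T. g j ((f(i := v)) j)) = g i ((f(i := v)) i) * (\<Prod>j\<in>T. g j ((f(i := v)) j))"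
      using insert(1,2) by (rule prod.insert)
    show "(\<Prod>j\<in>insert i T. g j (((snd p)(i:=fst p)) j)) = g i (fst p) * (\<Prod>j\<in>T. g j (snd p j))"
      unfolding pv fst_conv snd_conv h2 h1 fun_upd_same ..
  qed
  also have "\<dots> = (\<Sum>v\<in>V. g i v) * (\<Sum>f\<in>fs T V d. \<Prod>j\<in>T. g j (f j))"
    by (simp add: sum.cartesian_product case_prod_beta sum_product)
  also have "\<dots> = (\<Prod>j\<in>insert i T. \<Sum>v\<in>V. g j v)"
    using insert by simp
  finally show ?case .
qed

lemma sum_bool: "(\<Sum>u\<in>(UNIV::bool set). f u) = f True + f False"
  by (simp add: UNIV_bool add.commute)

lemma pauli1_orth:
  assumes "k < 4" "l < 4"
  shows "(\<Sum>u\<in>UNIV. \<Sum>v\<in>UNIV. cnj (pauli1 l u v) * pauli1 k u v) = (if k = l then 2 else 0)"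
proof -
  have "k \<in> {0,1,2,3}" "l \<in> {0,1,2,3}" using assms by auto
  then show ?thesis unfolding sum_bool pauli1_def by (auto simp: complex_eq_iff)
qed

lemma pauli1_compl:
  "(\<Sum>k<4. pauli1 k a b * cnj (pauli1 k a' b')) = (if a = a' \<and> b = b' then 2 else 0)"
  unfolding pauli1_def by (cases a; cases b; cases a'; cases b') (simp_all add: eval_nat_numeral complex_eq_iff)

lemma prod_if_const:
  fixes c :: "'a::comm_semiring_1"
  assumes "finite T"
  shows "(\<Prod>i\<in>T. if P i then c else 0) = (if \<forall>i\<in>T. P i then c ^ card T else 0)"
proof (cases "\<forall>i\<in>T. P i")
  case True
  then have "(\<Prod>i\<in>T. if P i then c else 0) = (\<Prod>i\<in>T. c)" by (intro prod.cong) auto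
  then show ?thesis using True by simp
next
  case False
  then obtain i where "i \<in> T" "\<not> P i" by auto
  then show ?thesis using False assms by (intro trans[OF prod_zero]) auto
qed

lemma pauli_orth:
  assumes T: "finite T" and x: "\<forall>i\<in>T. x i < 4" and y: "\<forall>i\<in>T. y i < 4"
  shows "(\<Sum>a\<in>bits_on T. \<Sum>b\<in>bits_on T. cnj (pauli_on T y a b) * pauli_on T x a b)
       = (if \<forall>i\<in>T. x i = y i then 2 ^ card T else 0)"
proof -
  have "(\<Sum>a\<in>bits_on T. \<Sum>b\<in>bits_on T. cnj (pauli_on T y a b) * pauli_on T x a b)
      = (\<Sum>a\<in>bits_on T. \<Sum>b\<in>bits_on T. \<Prod>i\<in>T. cnj (pauli1 (y i) (a i) (b i)) * pauli1 (x i) (a i) (b i))"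
    unfolding pauli_on_def by (simp add: prod.distrib)
  also have "\<dots> = (\<Sum>a\<in>bits_on T. \<Prod>i\<in>T. \<Sum>v\<in>UNIV. cnj (pauli1 (y i) (a i) v) * pauli1 (x i) (a i) v)"
    unfolding bits_on_fs by (intro sum.cong refl fs_sum_prod T) simp
  also have "\<dots> = (\<Prod>i\<in>T. \<Sum>u\<in>UNIV. \<Sum>v\<in>UNIV. cnj (pauli1 (y i) u v) * pauli1 (x i) u v)"
    unfolding bits_on_fs by (rule fs_sum_prod[OF T]) simp
  also have "\<dots> = (\<Prod>i\<in>T. if x i = y i then 2 else 0)"
    using x y by (intro prod.cong refl pauli1_orth) auto
  also have "\<dots> = (if \<forall>i\<in>T. x i = y i then 2 ^ card T else 0)"
    by (rule prod_if_const[OF T])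
  finally show ?thesis .
qed

lemma pauli_compl:
  assumes T: "finite T" and a: "a \<in> bits_on T" "a' \<in> bits_on T" and b: "b \<in> bits_on T" "b' \<in> bits_on T"
  shows "(\<Sum>x\<in>paulis_on T. pauli_on T x a b * cnj (pauli_on T x a' b'))
       = (if a = a' \<and> b = b' then 2 ^ card T else 0)"
proof -
  have "(\<Sum>x\<in>paulis_on T. pauli_on T x a b * cnj (pauli_on T x a' b'))
      = (\<Sum>x\<in>paulis_on T. \<Prod>i\<in>T. pauli1 (x i) (a i) (b i) * cnj (pauli1 (x i) (a' i) (b' i)))"
    unfolding pauli_on_def by (simp add: prod.distrib)
  also have "\<dots> = (\<Prod>i\<in>T. \<Sum>k<4. pauli1 k (a i) (b i) * cnj (pauli1 k (a' i) (b' i)))"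
    unfolding paulis_on_fs by (rule fs_sum_prod[OF T]) simp
  also have "\<dots> = (\<Prod>i\<in>T. if a i = a' i \<and> b i = b' i then 2 else 0)"
    by (simp add: pauli1_compl)
  also have "\<dots> = (if \<forall>i\<in>T. a i = a' i \<and> b i = b' i then 2 ^ card T else 0)"
    by (rule prod_if_const[OF T])
  also have "(\<forall>i\<in>T. a i = a' i \<and> b i = b' i) \<longleftrightarrow> a = a' \<and> b = b'"
    using a b unfolding bits_on_def by (auto intro!: ext)
  finally show ?thesis .
qed

lemma finite_bits: "finite T \<Longrightarrow> finite (bits_on T)"
  unfolding bits_on_fs by (rule fs_finite) auto

lemma finite_paulis: "finite T \<Longrightarrow> finite (paulis_on T)"
  unfolding paulis_on_fs by (rule fs_finite) auto

lemma swap3: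
  "(\<Sum>a\<in>A. \<Sum>b\<in>B. \<Sum>x\<in>C. H a b x) = (\<Sum>x\<in>C. \<Sum>a\<in>A. \<Sum>b\<in>B. H a b x)"
proof -
  have "(\<Sum>a\<in>A. \<Sum>b\<in>B. \<Sum>x\<in>C. H a b x) = (\<Sum>a\<in>A. \<Sum>x\<in>C. \<Sum>b\<in>B. H a b x)"
    by (rule sum.cong[OF refl], rule sum.swap)
  also have "\<dots> = (\<Sum>x\<in>C. \<Sum>a\<in>A. \<Sum>b\<in>B. H a b x)"
    by (rule sum.swap)
  finally show ?thesis .
qed

lemma swap4:
  "(\<Sum>a\<in>A. \<Sum>b\<in>B. \<Sum>x\<in>C. \<Sum>y\<in>D. H a b x y) = (\<Sum>x\<in>C. \<Sum>y\<in>D. \<Sum>a\<in>A. \<Sum>b\<in>B. H a b x y)"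
proof -
  have "(\<Sum>a\<in>A. \<Sum>b\<in>B. \<Sum>x\<in>C. \<Sum>y\<in>D. H a b x y) = (\<Sum>x\<in>C. \<Sum>a\<in>A. \<Sum>b\<in>B. \<Sum>y\<in>D. H a b x y)"
    by (rule swap3)
  also have "\<dots> = (\<Sum>x\<in>C. \<Sum>y\<in>D. \<Sum>a\<in>A. \<Sum>b\<in>B. H a b x y)"
    by (rule sum.cong[OF refl], rule swap3)
  finally show ?thesis .
qed

lemma parseval:
  fixes d :: "(nat \<Rightarrow> nat) \<Rightarrow> complex"
  assumes R: "finite R" and X: "finite X" and lt: "\<forall>x\<in>X. \<forall>i\<in>R. x i < 4"
    and inj: "\<forall>x\<in>X. \<forall>x'\<in>X. (\<forall>i\<in>R. x i = x' i) \<longrightarrow> x = x'"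
  shows "(\<Sum>a\<in>bits_on R. \<Sum>b\<in>bits_on R. (cmod (\<Sum>x\<in>X. d x * pauli_on R x a b))\<^sup>2)
       = 2 ^ card R * (\<Sum>x\<in>X. (cmod (d x))\<^sup>2)"
proof -
  let ?B = "bits_on R"
  have "complex_of_real (\<Sum>a\<in>?B. \<Sum>b\<in>?B. (cmod (\<Sum>x\<in>X. d x * pauli_on R x a b))\<^sup>2)
     = (\<Sum>a\<in>?B. \<Sum>b\<in>?B. (\<Sum>x\<in>X. d x * pauli_on R x a b) * cnj (\<Sum>x'\<in>X. d x' * pauli_on R x' a b))"
    by (simp add: complex_norm_square del: of_real_power)
  also have "\<dots> = (\<Sum>a\<in>?B. \<Sum>b\<in>?B. \<Sum>x\<in>X. \<Sum>x'\<in>X. (d x * cnj (d x')) * (cnj (pauli_on R x' a b) * pauli_on R x a b))"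
    by (rule sum.cong[OF refl], rule sum.cong[OF refl]) (simp add: sum_product cnj_sum mult_ac)
  also have "\<dots> = (\<Sum>x\<in>X. \<Sum>x'\<in>X. (d x * cnj (d x')) * (\<Sum>a\<in>?B. \<Sum>b\<in>?B. cnj (pauli_on R x' a b) * pauli_on R x a b))"
    by (rule trans[OF swap4]) (simp only: sum_distrib_left)
  also have "\<dots> = (\<Sum>x\<in>X. \<Sum>x'\<in>X. (d x * cnj (d x')) * (if x = x' then 2 ^ card R else 0))"
  proof (intro sum.cong refl)
    fix x x' assume "x \<in> X" "x' \<in> X"
    then show "(d x * cnj (d x')) * (\<Sum>a\<in>?B. \<Sum>b\<in>?B. cnj (pauli_on R x' a b) * pauli_on R x a b)
        = (d x * cnj (d x')) * (if x = x' then 2 ^ card R else 0)"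
    proof -
      have "(\<forall>i\<in>R. x i = x' i) \<longleftrightarrow> x = x'" using inj \<open>x \<in> X\<close> \<open>x' \<in> X\<close> by auto
      moreover have "(\<Sum>a\<in>?B. \<Sum>b\<in>?B. cnj (pauli_on R x' a b) * pauli_on R x a b)
          = (if \<forall>i\<in>R. x i = x' i then 2 ^ card R else 0)"
        using pauli_orth[OF R, of x x'] lt \<open>x \<in> X\<close> \<open>x' \<in> X\<close> by blast
      ultimately show ?thesis by simp
    qed
  qed
  also have "\<dots> = (\<Sum>x\<in>X. 2 ^ card R * (d x * cnj (d x)))"
  proof (rule sum.cong[OF refl])
    fix x assume x: "x \<in> X"
    have "(\<Sum>x'\<in>X. (d x * cnj (d x')) * (if x = x' then 2 ^ card R else 0))
        = (\<Sum>x'\<in>X. if x = x' then (d x * cnj (d x')) * 2 ^ card R else 0)"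
      by (rule sum.cong) auto
    also have "\<dots> = 2 ^ card R * (d x * cnj (d x))" using X x by simp
    finally show "(\<Sum>x'\<in>X. (d x * cnj (d x')) * (if x = x' then 2 ^ card R else 0)) = 2 ^ card R * (d x * cnj (d x))" .
  qed
  also have "\<dots> = complex_of_real (2 ^ card R * (\<Sum>x\<in>X. (cmod (d x))\<^sup>2))"
  proof -
    have "complex_of_real (2 ^ card R) = 2 ^ card R" by simp
    then show ?thesis by (simp add: complex_norm_square sum_distrib_left del: of_real_power)
  qed
  finally show ?thesis using of_real_eq_iff by blast
qed

lemma paulis_eq:
  assumes "x \<in> paulis_on T" "z \<in> paulis_on T"
  shows "(\<forall>i\<in>T. x i = z i) \<longleftrightarrow> x = z"
proof
  assume h: "\<forall>i\<in>T. x i = z i"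
  show "x = z"
  proof
    fix i show "x i = z i" using h assms unfolding paulis_on_def by (cases "i \<in> T") auto
  qed
qed simp

lemma paulis_lt: "x \<in> paulis_on T \<Longrightarrow> \<forall>i\<in>T. x i < 4"
  unfolding paulis_on_def by auto

lemma pauli_coeff_prop:
  fixes U :: qmat
  shows "(\<forall>x. x \<notin> paulis_on {..<n} \<longrightarrow> pauli_coeff n U x = 0) \<and>
    (\<forall>a\<in>bits_on {..<n}. \<forall>b\<in>bits_on {..<n}.
       U a b = (\<Sum>x\<in>paulis_on {..<n}. pauli_coeff n U x * pauli_on {..<n} x a b))"
proof -
  define T where "T = {..<n::nat}"
  define P where "P = paulis_on T"
  define B where "B = bits_on T"
  have T: "finite T" "card T = n" unfolding T_def by auto
  have fP: "finite P" unfolding P_def using T by (simp add: finite_paulis)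
  have fB: "finite B" unfolding B_def using T by (simp add: finite_bits)
  define Q where "Q c \<longleftrightarrow> (\<forall>x. x \<notin> P \<longrightarrow> c x = 0) \<and>
      (\<forall>a\<in>B. \<forall>b\<in>B. U a b = (\<Sum>x\<in>P. c x * pauli_on T x a b))" for c
  define c0 where "c0 x = (if x \<in> P then (\<Sum>a\<in>B. \<Sum>b\<in>B. cnj (pauli_on T x a b) * U a b) / 2^n else 0)" for x
  have Qc0: "Q c0"
    unfolding Q_def
  proof (intro conjI allI impI ballI)
    fix x assume "x \<notin> P" then show "c0 x = 0" unfolding c0_def by simp
  next
    fix a b assume a: "a \<in> B" and b: "b \<in> B"
    have "(\<Sum>x\<in>P. c0 x * pauli_on T x a b)
        = (\<Sum>x\<in>P. \<Sum>a'\<in>B. \<Sum>b'\<in>B. (U a' b' / 2^n) * (pauli_on T x a b * cnj (pauli_on T x a' b')))"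
      unfolding c0_def by (intro sum.cong refl) (simp add: sum_distrib_left sum_distrib_right sum_divide_distrib mult_ac)
    also have "\<dots> = (\<Sum>a'\<in>B. \<Sum>b'\<in>B. (U a' b' / 2^n) * (\<Sum>x\<in>P. pauli_on T x a b * cnj (pauli_on T x a' b')))"
      by (rule trans[OF swap3[symmetric]]) (simp only: sum_distrib_left)
    also have "\<dots> = (\<Sum>a'\<in>B. \<Sum>b'\<in>B. if a' = a \<and> b' = b then U a b else 0)"
    proof (intro sum.cong refl)
      fix a' b' assume "a' \<in> B" "b' \<in> B"
      then show "(U a' b' / 2^n) * (\<Sum>x\<in>P. pauli_on T x a b * cnj (pauli_on T x a' b')) = (if a' = a \<and> b' = b then U a b else 0)"
        using pauli_compl[OF T(1), of a a' b b'] a b T(2) unfolding P_def B_def by auto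
    qed
    also have "\<dots> = U a b"
    proof -
      have "(\<Sum>b'\<in>B. if a' = a \<and> b' = b then U a b else 0) = (if a' = a then U a b else 0)" for a'
        using b fB by (cases "a' = a") simp_all
      then show ?thesis using a fB by simp
    qed
    finally show "U a b = (\<Sum>x\<in>P. c0 x * pauli_on T x a b)" by simp
  qed
  have uniq: "c = c0" if Qc: "Q c" for c
  proof
    fix z show "c z = c0 z"
    proof (cases "z \<in> P")
      case False then show ?thesis using Qc unfolding Q_def c0_def by auto
    next
      case True
      have "(\<Sum>a\<in>B. \<Sum>b\<in>B. cnj (pauli_on T z a b) * U a b)
          = (\<Sum>a\<in>B. \<Sum>b\<in>B. \<Sum>x\<in>P. c x * (cnj (pauli_on T z a b) * pauli_on T x a b))"
        using Qc unfolding Q_def by (intro sum.cong refl) (simp add: sum_distrib_left mult_ac)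
      also have "\<dots> = (\<Sum>x\<in>P. c x * (\<Sum>a\<in>B. \<Sum>b\<in>B. cnj (pauli_on T z a b) * pauli_on T x a b))"
        by (rule trans[OF swap3]) (simp only: sum_distrib_left)
      also have "\<dots> = (\<Sum>x\<in>P. if x = z then c z * 2 ^ n else 0)"
      proof (rule sum.cong[OF refl])
        fix x assume x: "x \<in> P"
        have "(\<Sum>a\<in>B. \<Sum>b\<in>B. cnj (pauli_on T z a b) * pauli_on T x a b) = (if x = z then 2 ^ n else 0)"
          using pauli_orth[OF T(1), of x z] paulis_eq[of x T z] paulis_lt[of x T] paulis_lt[of z T] x True T(2)
          unfolding P_def B_def by simp
        then show "c x * (\<Sum>a\<in>B. \<Sum>b\<in>B. cnj (pauli_on T z a b) * pauli_on T x a b) = (if x = z then c z * 2 ^ n else 0)"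
          by simp
      qed
      also have "\<dots> = c z * 2 ^ n" using True fP by simp
      finally show ?thesis unfolding c0_def using True by simp
    qed
  qed
  have "pauli_coeff n U = c0"
    unfolding pauli_coeff_def
    apply (rule the_equality)
    using Qc0 uniq unfolding Q_def P_def B_def T_def by auto
  then show ?thesis using Qc0 unfolding Q_def P_def B_def T_def by simp
qed

lemma merge_bits:
  assumes "S \<subseteq> T" "a \<in> bits_on S" "a' \<in> bits_on (T - S)"
  shows "merge S a a' \<in> bits_on T"
  using assms unfolding bits_on_def merge_def by auto

lemma pauli_split:
  assumes "S \<subseteq> T" "finite T"
  shows "pauli_on T x (merge S a a') (merge S b b') = pauli_on S x a b * pauli_on (T - S) x a' b'"
proof -
  have "pauli_on T x (merge S a a') (merge S b b')
      = (\<Prod>i\<in>T - S. pauli1 (x i) (merge S a a' i) (merge S b b' i)) * (\<Prod>i\<in>S. pauli1 (x i) (merge S a a' i) (merge S b b' i))"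
    unfolding pauli_on_def using assms by (rule prod.subset_diff)
  also have "(\<Prod>i\<in>T - S. pauli1 (x i) (merge S a a' i) (merge S b b' i)) = pauli_on (T - S) x a' b'"
    unfolding pauli_on_def merge_def by (rule prod.cong) auto
  also have "(\<Prod>i\<in>S. pauli1 (x i) (merge S a a' i) (merge S b b' i)) = pauli_on S x a b"
    unfolding pauli_on_def merge_def by (rule prod.cong) auto
  finally show ?thesis by (simp add: mult.commute)
qed

lemma bell_prob_eq:
  fixes U :: qmat
  assumes S: "S \<subseteq> {..<n}" and y: "y \<in> paulis_on S"
  shows "bell_prob n S (choi n U) y
       = (\<Sum>x\<in>{x\<in>paulis_on {..<n}. \<forall>i\<in>S. x i = y i}. (cmod (pauli_coeff n U x))\<^sup>2)"
proof -
  define T where "T = {..<n::nat}"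
  define R where "R = T - S"
  define c where "c = pauli_coeff n U"
  define P where "P = paulis_on T"
  define X where "X = {x\<in>P. \<forall>i\<in>S. x i = y i}"
  define s where "s = card S"
  define r where "r = card R"
  have fT: "finite T" unfolding T_def by simp
  have ST: "S \<subseteq> T" using S unfolding T_def .
  have fS: "finite S" using fT ST finite_subset by blast
  have fR: "finite R" unfolding R_def using fT by simp
  have sr: "s + r = n" unfolding s_def r_def R_def T_def
    using card_Diff_subset[OF fS ST[unfolded T_def]] card_mono[OF _ ST[unfolded T_def]] by simp
  have fP: "finite P" unfolding P_def using fT by (rule finite_paulis)
  have fX: "finite X" unfolding X_def using fP by simp
  have dec: "\<And>a b. a \<in> bits_on T \<Longrightarrow> b \<in> bits_on T \<Longrightarrow> U a b = (\<Sum>x\<in>P. c x * pauli_on T x a b)"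
    using pauli_coeff_prop[of n U] unfolding c_def P_def T_def by blast
  define k where "k = complex_of_real (sqrt (2 ^ s))"
  define m where "m = complex_of_real (sqrt (2 ^ n))"
  define Z where "Z a' b' = (\<Sum>x\<in>X. c x * pauli_on R x a' b')" for a' b'
  let ?BS = "bits_on S"
  have inner: "(\<Sum>aS\<in>?BS. \<Sum>bS\<in>?BS. cnj (bell_vec S y aS bS) * choi n U (merge S aS a') (merge S bS b'))
      = (2 ^ s / (k * m)) * Z a' b'" if a': "a' \<in> bits_on R" and b': "b' \<in> bits_on R" for a' b'
  proof -
    have "(\<Sum>aS\<in>?BS. \<Sum>bS\<in>?BS. cnj (bell_vec S y aS bS) * choi n U (merge S aS a') (merge S bS b'))
      = (\<Sum>aS\<in>?BS. \<Sum>bS\<in>?BS. \<Sum>x\<in>P. (c x * pauli_on R x a' b' / (k * m)) * (cnj (pauli_on S y aS bS) * pauli_on S x aS bS))"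
    proof (rule sum.cong[OF refl], rule sum.cong[OF refl])
      fix aS bS assume aS: "aS \<in> ?BS" and bS: "bS \<in> ?BS"
      have "choi n U (merge S aS a') (merge S bS b') = (\<Sum>x\<in>P. c x * (pauli_on S x aS bS * pauli_on R x a' b')) / m"
        unfolding choi_def m_def R_def
        using dec[OF merge_bits[OF ST aS a'[unfolded R_def]] merge_bits[OF ST bS b'[unfolded R_def]]]
          pauli_split[OF ST fT] by simp
      moreover have "cnj (bell_vec S y aS bS) = cnj (pauli_on S y aS bS) / k"
        unfolding bell_vec_def choi_def k_def s_def by simp
      ultimately show "cnj (bell_vec S y aS bS) * choi n U (merge S aS a') (merge S bS b')
        = (\<Sum>x\<in>P. (c x * pauli_on R x a' b' / (k * m)) * (cnj (pauli_on S y aS bS) * pauli_on S x aS bS))"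
        by (simp add: sum_distrib_left sum_divide_distrib mult_ac)
    qed
    also have "\<dots> = (\<Sum>x\<in>P. (c x * pauli_on R x a' b' / (k * m)) * (\<Sum>aS\<in>?BS. \<Sum>bS\<in>?BS. cnj (pauli_on S y aS bS) * pauli_on S x aS bS))"
      by (rule trans[OF swap3]) (simp only: sum_distrib_left)
    also have "\<dots> = (\<Sum>x\<in>P. if \<forall>i\<in>S. x i = y i then (2 ^ s / (k * m)) * (c x * pauli_on R x a' b') else 0)"
    proof (rule sum.cong[OF refl])
      fix x assume x: "x \<in> P"
      have "\<forall>i\<in>S. x i < 4" using paulis_lt[of x T] x ST unfolding P_def by auto
      moreover have "\<forall>i\<in>S. y i < 4" using paulis_lt[OF y] .
      ultimately have "(\<Sum>aS\<in>?BS. \<Sum>bS\<in>?BS. cnj (pauli_on S y aS bS) * pauli_on S x aS bS)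
          = (if \<forall>i\<in>S. x i = y i then 2 ^ s else 0)"
        unfolding s_def by (rule pauli_orth[OF fS])
      then show "(c x * pauli_on R x a' b' / (k * m)) * (\<Sum>aS\<in>?BS. \<Sum>bS\<in>?BS. cnj (pauli_on S y aS bS) * pauli_on S x aS bS)
          = (if \<forall>i\<in>S. x i = y i then (2 ^ s / (k * m)) * (c x * pauli_on R x a' b') else 0)"
        by simp
    qed
    also have "\<dots> = (2 ^ s / (k * m)) * Z a' b'"
      unfolding Z_def X_def sum_distrib_left by (rule sum.inter_filter[OF fP, symmetric])
    finally show ?thesis .
  qed
  define K where "K = (2::real) ^ s / (sqrt (2 ^ s) * sqrt (2 ^ n))"
  have Kc: "2 ^ s / (k * m) = complex_of_real K" unfolding K_def k_def m_def by simp
  have K2: "K\<^sup>2 = 2 ^ s / 2 ^ n"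
  proof -
    have "K\<^sup>2 = (2 ^ s)\<^sup>2 / (2 ^ s * 2 ^ n)" unfolding K_def
      by (simp only: power_divide power_mult_distrib real_sqrt_pow2 zero_le_power zero_le_numeral)
    also have "\<dots> = 2 ^ s / 2 ^ n" by (simp add: power2_eq_square)
    finally show ?thesis .
  qed
  have "bell_prob n S (choi n U) y = (\<Sum>a'\<in>bits_on R. \<Sum>b'\<in>bits_on R. (cmod (complex_of_real K * Z a' b'))\<^sup>2)"
    unfolding bell_prob_def R_def[symmetric] T_def[symmetric] using inner Kc
    by (intro sum.cong refl) (simp add: R_def T_def)
  also have "\<dots> = (2 ^ s / 2 ^ n) * (\<Sum>a'\<in>bits_on R. \<Sum>b'\<in>bits_on R. (cmod (Z a' b'))\<^sup>2)"
    by (simp add: norm_mult power_mult_distrib K2 sum_distrib_left)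
  also have "(\<Sum>a'\<in>bits_on R. \<Sum>b'\<in>bits_on R. (cmod (Z a' b'))\<^sup>2) = 2 ^ r * (\<Sum>x\<in>X. (cmod (c x))\<^sup>2)"
    unfolding Z_def r_def
  proof (rule parseval[OF fR fX])
    show "\<forall>x\<in>X. \<forall>i\<in>R. x i < 4"
      unfolding X_def P_def R_def using paulis_lt[of _ T] by auto
    show "\<forall>x\<in>X. \<forall>x'\<in>X. (\<forall>i\<in>R. x i = x' i) \<longrightarrow> x = x'"
    proof (intro ballI impI)
      fix x x' assume x: "x \<in> X" and x': "x' \<in> X" and e: "\<forall>i\<in>R. x i = x' i"
      have "\<forall>i\<in>T. x i = x' i" using x x' e unfolding X_def R_def by auto
      then show "x = x'" using paulis_eq[of x T x'] x x' unfolding X_def P_def by auto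
    qed
  qed
  also have "(2 ^ s / 2 ^ n) * (2 ^ r * (\<Sum>x\<in>X. (cmod (c x))\<^sup>2)) = (\<Sum>x\<in>X. (cmod (c x))\<^sup>2)"
  proof -
    have "(2::real) ^ n = 2 ^ s * 2 ^ r" using sr by (metis power_add)
    then show ?thesis by simp
  qed
  finally show ?thesis unfolding X_def P_def T_def c_def .
qed

theorem mainTheorem7:
  fixes n :: nat and S :: "nat set" and U :: qmat
  assumes "unitary n U"
    and "S \<subseteq> {..<n}"
  shows "expected_X n S U = influence n S U"
proof -
  define P where "P = paulis_on {..<n}"
  define A where "A = {x\<in>P. \<exists>i\<in>S. x i \<noteq> 0}"
  define Y where "Y = paulis_on S - {(\<lambda>_. 0)}"
  define g where "g x = (\<lambda>i. if i \<in> S then x i else 0)" for x :: "nat \<Rightarrow> nat"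
  define f where "f x = (cmod (pauli_coeff n U x))\<^sup>2" for x
  have fS: "finite S" using assms(2) finite_subset by blast
  have fP: "finite P" unfolding P_def by (rule finite_paulis) simp
  have fA: "finite A" unfolding A_def using fP by simp
  have fY: "finite Y" unfolding Y_def using fS by (simp add: finite_paulis)
  have gA: "g ` A \<subseteq> Y"
  proof
    fix z assume "z \<in> g ` A"
    then obtain x where x: "x \<in> A" and z: "z = g x" by blast
    have "z \<in> paulis_on S" using x assms(2) unfolding z g_def A_def P_def paulis_on_def by auto
    moreover have "z \<noteq> (\<lambda>_. 0)"
    proof
      assume "z = (\<lambda>_. 0)"
      moreover obtain i where "i \<in> S" "x i \<noteq> 0" using x unfolding A_def by blast
      ultimately show False using fun_cong[of z "\<lambda>_. 0" i] unfolding z g_def by simp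
    qed
    ultimately show "z \<in> Y" unfolding Y_def by blast
  qed
  have fib: "{x\<in>A. g x = y} = {x\<in>P. \<forall>i\<in>S. x i = y i}" if y: "y \<in> Y" for y
  proof (rule set_eqI, rule iffI)
    fix x assume "x \<in> {x\<in>A. g x = y}"
    then show "x \<in> {x\<in>P. \<forall>i\<in>S. x i = y i}" unfolding A_def g_def by auto
  next
    fix x assume x: "x \<in> {x\<in>P. \<forall>i\<in>S. x i = y i}"
    have y0: "\<forall>i. i \<notin> S \<longrightarrow> y i = 0" "y \<noteq> (\<lambda>_. 0)" using y unfolding Y_def paulis_on_def by auto
    have gx: "g x = y"
    proof
      fix i show "g x i = y i" using x y0 unfolding g_def by auto
    qed
    obtain i where yi: "y i \<noteq> 0" using y0(2) by blast
    then have iS: "i \<in> S" using y0(1) by auto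
    then have "x i \<noteq> 0" using x yi by auto
    note iS this
    then show "x \<in> {x\<in>A. g x = y}" using x gx unfolding A_def by auto
  qed
  have "expected_X n S U = (\<Sum>y\<in>Y. \<Sum>x\<in>{x\<in>P. \<forall>i\<in>S. x i = y i}. f x)"
    unfolding expected_X_def Y_def[symmetric]
  proof (rule sum.cong[OF refl])
    fix y assume "y \<in> Y"
    then have "y \<in> paulis_on S" unfolding Y_def by blast
    then show "bell_prob n S (choi n U) y = (\<Sum>x\<in>{x\<in>P. \<forall>i\<in>S. x i = y i}. f x)"
      unfolding P_def f_def by (rule bell_prob_eq[OF assms(2)])
  qed
  also have "\<dots> = (\<Sum>y\<in>Y. \<Sum>x\<in>{x\<in>A. g x = y}. f x)"
    using fib by (intro sum.cong refl) simp
  also have "\<dots> = (\<Sum>x\<in>A. f x)"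
    by (rule sum.group[OF fA fY gA])
  also have "\<dots> = influence n S U"
    unfolding influence_def A_def P_def f_def ..
  finally show ?thesis .
qed

end
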